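(* Let $N\ge 2$, let $T_N$ be the homogeneous tree in which every vertex has degree $N$, and fix a root $o$. Let $m>1$ and $(p,q)\in G_3=\{(p,q): p<0,\ m-1<q<m\}$. Then for every $\epsilon>0$ there exists a weight $\mu$ on $T_N$ such that $$W_o(n)\asymp n^{\frac{q}{q-m+1}}(\ln n)^{\frac{m-1}{q-m+1}+\epsilon}\quad\text{for } n\ge 2,$$ and the inequality $\Delta_m u+u^p|\nabla u|^q\le 0$ on $T_N$ admits a nontrivial positive solution.
   Context: A weight on a graph $(V,E)$ is a symmetric function $\mu:V\times V\to[0,\infty)$ with $\mu_{xy}=\mu_{yx}>0$ if and only if $x\sim y$ (adjacent); $\mu(x)=\sum_{y\sim x}\mu_{xy}$. For $m>1$, $\Delta_m u(x)=\frac{1}{\mu(x)}\sum_{y\sim x}\mu_{xy}|u(y)-u(x)|^{m-2}(u(y)-u(x))$ and $|\nabla u(x)|=\big(\sum_{y\sim x}\frac{\mu_{xy}}{2\mu(x)}(u(y)-u(x))^2\big)^{1/2}$. $d$ is the graph distance, $B(o,n)=\{x: d(o,x)\le n\}$, $W_o(n)=\sum_{x\in B(o,n),\,y\in V,\,d(o,x)<d(o,y)}\mu_{xy}$. $f(n)\asymp g(n)$ for $n\ge2$ means there are constants $c,C>0$ with $c\,g(n)\le f(n)\le C\,g(n)$ for all $n\ge 2$. A nontrivial positive solution is a non-constant $u:V\to(0,\infty)$ with $\Delta_m u(x)+u(x)^p|\nabla u(x)|^q\le0$ for all $x\in V$. *)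

theory Defs
  imports Complex_Main
begin

text \<open>The homogeneous tree T_N: vertices are words a_0 a_1 ... a_k (nat lists) with
  a_0 < N and a_i < N - 1 for i \<ge> 1; the root is the empty word; x ~ y iff one word
  extends the other by exactly one letter. The root has N children, every other vertex
  has N - 1 children and one parent, so every vertex has degree N.\<close>

definition tree_V :: "nat \<Rightarrow> nat list set" where
  "tree_V N = {xs. \<forall>i<length xs. xs ! i < (if i = 0 then N else N - 1)}"

definition tree_adj :: "nat \<Rightarrow> nat list \<Rightarrow> nat list \<Rightarrow> bool" where
  "tree_adj N x y \<longleftrightarrow> x \<in> tree_V N \<and> y \<in> tree_V N \<and> (\<exists>a. y = x @ [a] \<or> x = y @ [a])"

definition nbrs :: "('a \<Rightarrow> 'a \<Rightarrow> bool) \<Rightarrow> 'a \<Rightarrow> 'a set" where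
  "nbrs adj x = {y. adj x y}"

definition gdist :: "('a \<Rightarrow> 'a \<Rightarrow> bool) \<Rightarrow> 'a \<Rightarrow> 'a \<Rightarrow> nat" where
  "gdist adj x y = (LEAST n. (adj ^^ n) x y)"

definition is_weight :: "'a set \<Rightarrow> ('a \<Rightarrow> 'a \<Rightarrow> bool) \<Rightarrow> ('a \<Rightarrow> 'a \<Rightarrow> real) \<Rightarrow> bool" where
  "is_weight V adj mu \<longleftrightarrow> (\<forall>x\<in>V. \<forall>y\<in>V. mu x y = mu y x \<and> mu x y \<ge> 0 \<and> (mu x y > 0 \<longleftrightarrow> adj x y))"

definition vmeas :: "('a \<Rightarrow> 'a \<Rightarrow> bool) \<Rightarrow> ('a \<Rightarrow> 'a \<Rightarrow> real) \<Rightarrow> 'a \<Rightarrow> real" where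
  "vmeas adj mu x = (\<Sum>y\<in>nbrs adj x. mu x y)"

text \<open>m-Laplacian; |t|^(m-2) t is read as 0 at t = 0 (0 powr a = 0).\<close>
definition mLap :: "('a \<Rightarrow> 'a \<Rightarrow> bool) \<Rightarrow> ('a \<Rightarrow> 'a \<Rightarrow> real) \<Rightarrow> real \<Rightarrow> ('a \<Rightarrow> real) \<Rightarrow> 'a \<Rightarrow> real" where
  "mLap adj mu m u x = (1 / vmeas adj mu x) *
     (\<Sum>y\<in>nbrs adj x. mu x y * \<bar>u y - u x\<bar> powr (m - 2) * (u y - u x))"

definition gradn :: "('a \<Rightarrow> 'a \<Rightarrow> bool) \<Rightarrow> ('a \<Rightarrow> 'a \<Rightarrow> real) \<Rightarrow> ('a \<Rightarrow> real) \<Rightarrow> 'a \<Rightarrow> real" where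
  "gradn adj mu u x = sqrt (\<Sum>y\<in>nbrs adj x. mu x y / (2 * vmeas adj mu x) * (u y - u x)\<^sup>2)"

text \<open>W_o(n); pairs with mu x y = 0 (non-adjacent) contribute nothing, so we sum over edges.\<close>
definition Wo :: "'a set \<Rightarrow> ('a \<Rightarrow> 'a \<Rightarrow> bool) \<Rightarrow> ('a \<Rightarrow> 'a \<Rightarrow> real) \<Rightarrow> 'a \<Rightarrow> nat \<Rightarrow> real" where
  "Wo V adj mu r n = (\<Sum>(x, y)\<in>{(x, y). x \<in> V \<and> y \<in> V \<and> adj x y \<and> gdist adj r x \<le> n
        \<and> gdist adj r x < gdist adj r y}. mu x y)"

definition nontrivial_pos_solution ::
  "'a set \<Rightarrow> ('a \<Rightarrow> 'a \<Rightarrow> bool) \<Rightarrow> ('a \<Rightarrow> 'a \<Rightarrow> real) \<Rightarrow> real \<Rightarrow> real \<Rightarrow> real \<Rightarrow> ('a \<Rightarrow> real) \<Rightarrow> bool" where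
  "nontrivial_pos_solution V adj mu m p q u \<longleftrightarrow>
     (\<forall>x\<in>V. u x > 0) \<and> (\<exists>x\<in>V. \<exists>y\<in>V. u x \<noteq> u y) \<and>
     (\<forall>x\<in>V. mLap adj mu m u x + u x powr p * gradn adj mu u x powr q \<le> 0)"

end

theory Submission
  imports Defs "HOL-Analysis.Analysis"
begin


lemma key_ineq:
  fixes A B E1 E2 R V \<rho> m p q :: real
  assumes A: "A \<ge> 0" and B: "B > 0" and E2: "0 < E2" "E2 \<le> E1" and R: "E1 \<le> R * E2"
    and V: "V \<ge> 1" and p: "p \<le> 0" and q: "q > 0" and m: "m > 1"
    and J: "A * E1 powr (m-1) \<le> (1-\<rho>) * (B * E2 powr (m-1))"
    and S: "2 * R powr q * E2 powr (q-m+1) \<le> \<rho>"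
  shows "(A * E1 powr (m-1) - B * E2 powr (m-1)) / (A+B)
          + V powr p * sqrt ((A*E1^2 + B*E2^2)/(2*(A+B))) powr q \<le> 0"
proof -
  have E1: "E1 > 0" using E2 by linarith
  have Rp: "R > 0" using R E1 E2 by (smt (verit) mult_nonpos_nonneg)
  define g where "g = sqrt ((A*E1^2 + B*E2^2)/(2*(A+B)))"
  have "E2^2 \<le> E1^2" using E2 by (simp add: power_mono)
  then have "A*E1^2 + B*E2^2 \<le> (A+B)*E1^2" using A B
    by (simp add: distrib_right mult_left_mono)
  then have "(A*E1^2 + B*E2^2)/(2*(A+B)) \<le> E1^2"
  proof -
    have "0 \<le> (A+B)*E1^2" using A B by simp
    then have "A*E1^2 + B*E2^2 \<le> E1^2 * (2*(A+B))" using \<open>A*E1^2 + B*E2^2 \<le> (A+B)*E1^2\<close> by (simp add: algebra_simps)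
    moreover have "2*(A+B) > 0" using A B by simp
    ultimately show ?thesis by (simp add: pos_divide_le_eq)
  qed
  then have "g \<le> sqrt (E1^2)" unfolding g_def using real_sqrt_le_mono by blast
  then have gE: "g \<le> E1" using E1 by simp
  have g0: "g \<ge> 0" unfolding g_def using A B E1 E2 by simp
  have "g powr q \<le> E1 powr q" using powr_mono2[of q g E1] gE g0 q by simp
  also have "\<dots> \<le> (R*E2) powr q" using powr_mono2[of q E1 "R*E2"] R E1 q by simp
  also have "\<dots> = R powr q * E2 powr q" using Rp E2 by (simp add: powr_mult)
  finally have g1: "g powr q \<le> R powr q * E2 powr q" .
  have Vp: "V powr p \<le> 1" using V p
    by (metis powr_mono powr_zero_eq_one order.trans zero_le_one not_one_le_zero) 
  have Vp0: "V powr p \<ge> 0" by simp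
  have t2: "V powr p * g powr q \<le> R powr q * E2 powr q"
    using Vp Vp0 g1 by (smt (verit) mult_left_le_one_le powr_ge_zero mult_nonneg_nonneg)
  have rho0: "\<rho> \<ge> 0" using S Rp E2 by (smt (verit) mult_pos_pos powr_gt_zero)
  have e12: "E2 powr (m-1) \<le> E1 powr (m-1)" using powr_mono2[of "m-1" E2 E1] E2 m by simp
  have ep: "E2 powr (m-1) > 0" using E2 by simp
  have "A * E1 powr (m-1) \<le> B * E1 powr (m-1)"
  proof -
    have "A * E1 powr (m-1) \<le> B * E2 powr (m-1)"
    proof -
      have "\<rho> * (B * E2 powr (m-1)) \<ge> 0" using rho0 B ep by simp
      then show ?thesis using J by (simp add: algebra_simps)
    qed
    also have "\<dots> \<le> B * E1 powr (m-1)" using e12 B by simp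
    finally show ?thesis .
  qed
  then have AB: "A \<le> B" using E1 by simp
  have "(A * E1 powr (m-1) - B * E2 powr (m-1)) \<le> - \<rho> * (B * E2 powr (m-1))"
    using J by (simp add: algebra_simps)
  then have "(A * E1 powr (m-1) - B * E2 powr (m-1)) / (A+B) \<le> - \<rho> * (B * E2 powr (m-1)) / (A+B)"
    using A B divide_right_mono[of _ _ "A+B"] by (metis add_nonneg_pos less_imp_le)
  also have "\<dots> \<le> - \<rho> * E2 powr (m-1) / 2"
  proof -
    have "\<rho> * E2 powr (m-1) * (A+B) \<le> \<rho> * E2 powr (m-1) * (2*B)"
      using AB rho0 ep by (simp add: mult_left_mono)
    then show ?thesis using A B by (simp add: field_simps)
  qed
  finally have t1: "(A * E1 powr (m-1) - B * E2 powr (m-1)) / (A+B) \<le> - \<rho> * E2 powr (m-1) / 2" .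
  have "E2 powr q = E2 powr (q-m+1) * E2 powr (m-1)" using E2 by (simp add: powr_add[symmetric])
  then have "R powr q * E2 powr q = (R powr q * E2 powr (q-m+1)) * E2 powr (m-1)" by simp
  also have "\<dots> \<le> (\<rho>/2) * E2 powr (m-1)" using S ep by (simp add: mult_right_mono)
  finally have "R powr q * E2 powr q \<le> (\<rho>/2) * E2 powr (m-1)" .
  then show ?thesis using t1 t2 unfolding g_def by simp
qed



definition Eseq :: "real \<Rightarrow> real \<Rightarrow> nat \<Rightarrow> real" where
  "Eseq s b k = (s / (real (k+3) * ln (real (k+3)))) powr b"

definition Gseq :: "real \<Rightarrow> real \<Rightarrow> nat \<Rightarrow> real" where
  "Gseq a be k = real (k+3) powr a * ln (real (k+3)) powr be"

lemma ln_k3_pos: "ln (real (k+3)) > 0" by simp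

lemma tlnt_mono: "real (k+3) * ln (real (k+3)) \<le> real (Suc k+3) * ln (real (Suc k+3))"
  by (intro mult_mono) auto

lemma tlnt_pos: "real (k+3) * ln (real (k+3)) > 0" by simp

lemma Eseq_pos: "s > 0 \<Longrightarrow> Eseq s b k > 0" unfolding Eseq_def by simp

lemma Eseq_dec: assumes "s > 0" "b > 0" shows "Eseq s b (Suc k) \<le> Eseq s b k"
proof -
  have "s / (real (Suc k+3) * ln (real (Suc k+3))) \<le> s / (real (k+3) * ln (real (k+3)))"
    using assms tlnt_mono[of k] tlnt_pos[of k] by (intro divide_left_mono) auto
  then show ?thesis unfolding Eseq_def using assms tlnt_pos[of "Suc k"]
    by (intro powr_mono2) auto
qed

lemma Eseq_ratio: assumes "s > 0" "b > 0" shows "Eseq s b k \<le> 4 powr b * Eseq s b (Suc k)"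
proof -
  define t where "t = real (k+3)"
  have t3: "t \<ge> 3" unfolding t_def by simp
  have t1: "real (Suc k + 3) = t + 1" unfolding t_def by simp
  have "3*t \<le> t*t" using t3 mult_right_mono[of 3 t t] by simp
  then have "t + 1 \<le> t^2" using t3 by (unfold power2_eq_square) linarith
  then have "ln (t+1) \<le> ln (t^2)" using t3 by simp
  also have "\<dots> = 2 * ln t" using t3 by (simp add: ln_realpow)
  finally have l: "ln (t+1) \<le> 2 * ln t" .
  have "(t+1) * ln (t+1) \<le> (2*t) * (2 * ln t)"
    using l t3 by (intro mult_mono) auto
  then have h: "(t+1) * ln (t+1) \<le> 4 * (t * ln t)" by simp
  have p1: "t * ln t > 0" using t3 by simp
  have p2: "(t+1) * ln (t+1) > 0" using t3 by simp
  have "s / (t * ln t) = (4 * s) / (4 * (t * ln t))" by simp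
  also have "\<dots> \<le> (4 * s) / ((t+1) * ln (t+1))" using h p2 assms by (intro divide_left_mono) auto
  also have "\<dots> = 4 * (s / ((t+1) * ln (t+1)))" by simp
  finally have "s / (t * ln t) \<le> 4 * (s / ((t+1) * ln (t+1)))" .
  then have "(s / (t * ln t)) powr b \<le> (4 * (s / ((t+1) * ln (t+1)))) powr b"
    using assms p1 by (intro powr_mono2) auto
  also have "\<dots> = 4 powr b * (s / ((t+1) * ln (t+1))) powr b"
    by (rule powr_mult)
  finally show ?thesis unfolding Eseq_def t1 t_def[symmetric] .
qed

lemma J_eq:
  assumes "s > 0" "a = b * (m-1)"
  shows "Gseq a (a + \<epsilon>) k * Eseq s b k powr (m-1) = s powr a * ln (real (k+3)) powr \<epsilon>"
proof -
  define t where "t = real (k+3)"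
  define L where "L = ln (real (k+3))"
  have t: "t > 0" and L: "L > 0" unfolding t_def L_def by auto
  have "Eseq s b k powr (m-1) = (s / (t * L)) powr a"
    unfolding Eseq_def t_def L_def assms(2) by (simp add: powr_powr)
  also have "\<dots> = s powr a / (t powr a * L powr a)"
    using t L assms by (simp add: powr_divide powr_mult)
  finally have e: "Eseq s b k powr (m-1) = s powr a / (t powr a * L powr a)" .
  have "Gseq a (a + \<epsilon>) k = t powr a * (L powr a * L powr \<epsilon>)"
    unfolding Gseq_def t_def L_def by (simp add: powr_add)
  then show ?thesis using e t L unfolding L_def[symmetric] by simp
qed

lemma Eseq_powr:
  assumes "s > 0" "b * d = 1"
  shows "Eseq s b k powr d = s / (real (k+3) * ln (real (k+3)))"
  unfolding Eseq_def using assms tlnt_pos[of k] by (simp add: powr_powr)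

lemma rho_bound:
  fixes t \<epsilon> :: real
  assumes t: "t \<ge> 4" and e: "\<epsilon> > 0"
  shows "min \<epsilon> 1 / (t * ln t) \<le> 1 - (ln (t-1) / ln t) powr \<epsilon>"
proof -
  define x where "x = ln (t-1) / ln t"
  have lt: "ln t > 0" using t by simp
  have lt1: "ln (t-1) > 0" using t by simp
  have x0: "x > 0" unfolding x_def using lt lt1 by simp
  have "ln (t-1) < ln t" using t by simp
  then have x1: "x < 1" unfolding x_def using lt by simp
  have "ln ((t-1)/t) \<le> (t-1)/t - 1" using t by (intro ln_le_minus_one) auto
  also have "\<dots> = - (1/t)" using t by (simp add: field_simps)
  finally have "ln t - ln (t-1) \<ge> 1/t" using t by (simp add: ln_div)
  then have "1 - x \<ge> (1/t) / ln t" unfolding x_def using lt by (simp add: field_simps)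
  then have hx: "1 / (t * ln t) \<le> 1 - x" by simp
  have hm: "min \<epsilon> 1 * (1 - x) \<le> 1 - x powr \<epsilon>"
  proof (cases "\<epsilon> \<ge> 1")
    case True
    have "x powr \<epsilon> \<le> x powr 1" using True x0 x1 by (intro powr_mono') auto
    then show ?thesis using True x0 by simp
  next
    case False
    have "x powr \<epsilon> * 1 powr (1-\<epsilon>) \<le> \<epsilon>*x + (1-\<epsilon>)*1"
      using False e x0 by (intro Youngs_inequality_0) auto
    then show ?thesis using False by (simp add: algebra_simps)
  qed
  have "min \<epsilon> 1 / (t * ln t) = min \<epsilon> 1 * (1 / (t * ln t))" by simp
  also have "\<dots> \<le> min \<epsilon> 1 * (1 - x)" using hx e by (intro mult_left_mono) auto
  finally show ?thesis using hm unfolding x_def by simp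
qed

lemma Eseq_summable:
  assumes "s > 0" "b > 1"
  shows "summable (Eseq s b)"
proof -
  have sm: "summable (\<lambda>n. real n powr (-b))" using assms summable_real_powr_iff by simp
  then have sm3: "summable (\<lambda>n. real (n+3) powr (-b))"
    using summable_ignore_initial_segment[OF sm, of 3] by simp
  have "summable (\<lambda>n. s powr b * real (n+3) powr (-b))" using sm3 by (rule summable_mult)
  moreover have "norm (Eseq s b n) \<le> s powr b * real (n+3) powr (-b)" for n
  proof -
    have "s / (real (n+3) * ln (real (n+3))) \<le> s / real (n+3)"
    proof -
      have "ln (real (n+3)) \<ge> 1"
      proof -
        have "exp 1 \<le> real (n+3)" using exp_le by simp
        then show ?thesis using ln_ge_iff by (metis ln_exp ln_le_cancel_iff exp_gt_zero of_nat_0_less_iff  zero_less_numeral add_pos_nonneg of_nat_0_le_iff order_less_le_trans)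
      qed
      then have "real (n+3) \<le> real (n+3) * ln (real (n+3))" by simp
      then show ?thesis using assms by (intro divide_left_mono) auto
    qed
    then have "Eseq s b n \<le> (s / real (n+3)) powr b" unfolding Eseq_def using assms tlnt_pos[of n]
      by (intro powr_mono2) auto
    also have "\<dots> = s powr b / real (n+3) powr b" by (rule powr_divide)
    also have "\<dots> = s powr b * real (n+3) powr (-b)" by (simp add: powr_minus divide_inverse)
    finally show ?thesis using Eseq_pos[OF assms(1), of b n] by simp
  qed
  ultimately show ?thesis using summable_comparison_test'[where N=0] by blast
qed



lemma Gseq_mono: assumes "a \<ge> 0" "be \<ge> 0" "k \<le> n" shows "Gseq a be k \<le> Gseq a be n"
  unfolding Gseq_def using assms by (intro mult_mono powr_mono2) auto

lemma W_upper:
  assumes a: "a \<ge> 0" and be: "be \<ge> 0" and n: "n \<ge> 2"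
  shows "(\<Sum>k\<le>n. Gseq a be k) \<le> (2 * 3 powr a * 3 powr be) * (real n powr (a+1) * ln (real n) powr be)"
proof -
  have "(\<Sum>k\<le>n. Gseq a be k) \<le> real (card {..n}) * Gseq a be n"
    using Gseq_mono[OF a be] by (intro sum_bounded_above) auto
  also have "\<dots> = real (n+1) * Gseq a be n" by simp
  also have "\<dots> \<le> (2 * real n) * ((3 * real n) powr a * (3 * ln (real n)) powr be)"
  proof (intro mult_mono)
    show "real (n+1) \<le> 2 * real n" using n by simp
    have "real (n+3) \<le> 3 * real n" using n by simp
    then have h1: "real (n+3) powr a \<le> (3 * real n) powr a" using a by (intro powr_mono2) auto
    have "real n + 3 \<le> real n ^ 3"
    proof -
      have "real n * real n \<ge> 2 * real n" using n by (intro mult_right_mono) auto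
      then have "2 * real n * real n \<le> real n * real n * real n" using mult_right_mono[of "2 * real n" "real n * real n" "real n"] by simp
      then have "real n ^ 3 \<ge> 2 * real n * real n" by (simp add: power3_eq_cube)
      moreover have "2 * real n * real n \<ge> 4 * real n" using n mult_left_mono[of 2 "real n" "2 * real n"] by simp
      ultimately show ?thesis using n by linarith
    qed
    then have "ln (real (n+3)) \<le> ln (real n ^ 3)" using n by simp
    also have "\<dots> = 3 * ln (real n)" using n by (simp add: ln_realpow)
    finally have "ln (real (n+3)) powr be \<le> (3 * ln (real n)) powr be" using be by (intro powr_mono2) auto
    then show "Gseq a be n \<le> (3 * real n) powr a * (3 * ln (real n)) powr be"
      unfolding Gseq_def using h1 by (intro mult_mono) auto
  qed (use n in \<open>auto simp: Gseq_def\<close>)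
  also have "\<dots> = (2 * 3 powr a * 3 powr be) * ((real n * real n powr a) * ln (real n) powr be)"
    by (simp add: powr_mult)
  also have "real n * real n powr a = real n powr (a+1)" using n by (simp add: powr_add)
  finally show ?thesis .
qed

lemma W_lower:
  assumes a: "a \<ge> 0" and be: "be \<ge> 0" and n: "n \<ge> 2"
  shows "((1/2) * (1/2) powr a * (1/2) powr be) * (real n powr (a+1) * ln (real n) powr be) \<le> (\<Sum>k\<le>n. Gseq a be k)"
proof -
  have pos: "\<And>k. Gseq a be k \<ge> 0" unfolding Gseq_def by simp
  have lb: "(real n / 2) powr a * (ln (real n) / 2) powr be \<le> Gseq a be k" if k: "k \<in> {n div 2..n}" for k
  proof -
    have k2: "2 * k + 1 \<ge> n" using k by auto
    have "real n / 2 \<le> real (k+3)" using k2 by simp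
    then have h1: "(real n / 2) powr a \<le> real (k+3) powr a" using a n by (intro powr_mono2) auto
    have "n \<le> (k+3)^2" using k2 by (simp add: power2_eq_square algebra_simps)
    then have "real n \<le> real (k+3) ^ 2" by (metis of_nat_le_iff of_nat_power)
    then have "ln (real n) \<le> ln (real (k+3) ^ 2)" using n by simp
    also have "\<dots> = 2 * ln (real (k+3))" by (simp add: ln_realpow)
    finally have "ln (real n) / 2 \<le> ln (real (k+3))" by simp
    then have h2: "(ln (real n) / 2) powr be \<le> ln (real (k+3)) powr be" using be n by (intro powr_mono2) auto
    show ?thesis unfolding Gseq_def using h1 h2 by (intro mult_mono) auto
  qed
  have "real n / 2 * ((real n / 2) powr a * (ln (real n) / 2) powr be)
        \<le> real (card {n div 2..n}) * ((real n / 2) powr a * (ln (real n) / 2) powr be)"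
  proof (intro mult_right_mono)
    have "card {n div 2..n} = n + 1 - n div 2" by simp
    then show "real n / 2 \<le> real (card {n div 2..n})" by linarith
  qed simp
  also have "\<dots> \<le> (\<Sum>k\<in>{n div 2..n}. Gseq a be k)" using lb by (intro sum_bounded_below) auto
  also have "\<dots> \<le> (\<Sum>k\<le>n. Gseq a be k)" using pos by (intro sum_mono2) auto
  finally have *: "real n / 2 * ((real n / 2) powr a * (ln (real n) / 2) powr be) \<le> (\<Sum>k\<le>n. Gseq a be k)" .
  have "real n / 2 * ((real n / 2) powr a * (ln (real n) / 2) powr be)
      = ((1/2) * (1/2) powr a * (1/2) powr be) * ((real n * real n powr a) * ln (real n) powr be)"
    by (simp add: powr_divide powr_mult field_simps)
  also have "real n * real n powr a = real n powr (a+1)" using n by (simp add: powr_add)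
  finally show ?thesis using * by simp
qed



definition bnd :: "nat \<Rightarrow> nat \<Rightarrow> nat" where
  "bnd N k = (if k = 0 then N else N - 1)"

definition lvl :: "nat \<Rightarrow> nat \<Rightarrow> nat list set" where
  "lvl N k = {x \<in> tree_V N. length x = k}"

lemma V_Nil: "[] \<in> tree_V N" unfolding tree_V_def by simp

lemma V_snoc: "xs @ [a] \<in> tree_V N \<longleftrightarrow> xs \<in> tree_V N \<and> a < bnd N (length xs)"
  unfolding tree_V_def bnd_def
  by (auto simp: nth_append less_Suc_eq split: if_splits)

lemma V_butlast: assumes "xs \<in> tree_V N" shows "butlast xs \<in> tree_V N"
proof (cases "xs = []")
  case True then show ?thesis using assms by simp
next
  case False
  then have "xs = butlast xs @ [last xs]" by simp
  then show ?thesis using assms V_snoc by metis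
qed

lemma adj_sym: "tree_adj N x y = tree_adj N y x"
  unfolding tree_adj_def by blast

lemma nbrs_eq:
  assumes x: "x \<in> tree_V N"
  shows "nbrs (tree_adj N) x = (\<lambda>a. x @ [a]) ` {..<bnd N (length x)} \<union> (if x = [] then {} else {butlast x})"
proof (intro set_eqI iffI)
  fix y assume "y \<in> nbrs (tree_adj N) x"
  then have y: "y \<in> tree_V N" and "\<exists>a. y = x @ [a] \<or> x = y @ [a]"
    unfolding nbrs_def tree_adj_def by auto
  then obtain a where "y = x @ [a] \<or> x = y @ [a]" by blast
  then show "y \<in> (\<lambda>a. x @ [a]) ` {..<bnd N (length x)} \<union> (if x = [] then {} else {butlast x})"
  proof
    assume "y = x @ [a]" then show ?thesis using y V_snoc by auto
  next
    assume "x = y @ [a]" then show ?thesis by auto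
  qed
next
  fix y assume "y \<in> (\<lambda>a. x @ [a]) ` {..<bnd N (length x)} \<union> (if x = [] then {} else {butlast x})"
  then show "y \<in> nbrs (tree_adj N) x"
  proof
    assume "y \<in> (\<lambda>a. x @ [a]) ` {..<bnd N (length x)}"
    then obtain a where "a < bnd N (length x)" "y = x @ [a]" by auto
    then show ?thesis unfolding nbrs_def tree_adj_def using x V_snoc by auto
  next
    assume h: "y \<in> (if x = [] then {} else {butlast x})"
    then have "x \<noteq> []" "y = butlast x" by (auto split: if_splits)
    then have "x = y @ [last x]" by simp
    then show ?thesis unfolding nbrs_def tree_adj_def using x V_butlast \<open>y = butlast x\<close> by blast
  qed
qed

lemma finite_nbrs: "x \<in> tree_V N \<Longrightarrow> finite (nbrs (tree_adj N) x)"
  using nbrs_eq by simp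

lemma sum_nbrs_root:
  "(\<Sum>y\<in>nbrs (tree_adj N) []. h y) = (\<Sum>a<N. h [a])"
proof -
  have "nbrs (tree_adj N) [] = (\<lambda>a. [a]) ` {..<N}" using nbrs_eq[OF V_Nil, of N] by (simp add: bnd_def)
  moreover have "inj_on (\<lambda>a. [a]) {..<N}" by (auto simp: inj_on_def)
  ultimately show ?thesis by (simp add: sum.reindex)
qed

lemma sum_nbrs_succ:
  assumes x: "x \<in> tree_V N" and ne: "x \<noteq> []"
  shows "(\<Sum>y\<in>nbrs (tree_adj N) x. h y) = h (butlast x) + (\<Sum>a<N-1. h (x @ [a]))"
proof -
  have "nbrs (tree_adj N) x = insert (butlast x) ((\<lambda>a. x @ [a]) ` {..<N-1})"
    using nbrs_eq[OF x] ne by (auto simp: bnd_def)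
  moreover have "butlast x \<notin> (\<lambda>a. x @ [a]) ` {..<N-1}"
  proof
    assume "butlast x \<in> (\<lambda>a. x @ [a]) ` {..<N-1}"
    then obtain a where "butlast x = x @ [a]" by auto
    then have "length (butlast x) = Suc (length x)" by simp
    then show False by simp
  qed
  moreover have "inj_on (\<lambda>a. x @ [a]) {..<N-1}" by (auto simp: inj_on_def)
  ultimately show ?thesis by (simp add: sum.reindex)
qed

lemma adj_len: "tree_adj N x y \<Longrightarrow> length y \<le> Suc (length x)"
  unfolding tree_adj_def by auto

lemma pow_len: "(tree_adj N ^^ n) x y \<Longrightarrow> length y \<le> length x + n"
proof (induction n arbitrary: y)
  case 0 then show ?case by simp
next
  case (Suc n)
  then obtain z where "(tree_adj N ^^ n) x z" "tree_adj N z y" by auto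
  then show ?case using Suc.IH adj_len by fastforce
qed

lemma pow_reach: "x \<in> tree_V N \<Longrightarrow> (tree_adj N ^^ length x) [] x"
proof (induction x rule: rev_induct)
  case Nil then show ?case by simp
next
  case (snoc a xs)
  then have xs: "xs \<in> tree_V N" using V_snoc by blast
  have "tree_adj N xs (xs @ [a])" unfolding tree_adj_def using xs snoc.prems by blast
  then show ?case using snoc.IH[OF xs] by auto
qed

lemma gdist_root: "x \<in> tree_V N \<Longrightarrow> gdist (tree_adj N) [] x = length x"
  unfolding gdist_def
  by (rule Least_equality) (use pow_reach pow_len in fastforce)+

lemma lvl_0: "lvl N 0 = {[]}" unfolding lvl_def using V_Nil by auto

lemma lvl_Suc: "lvl N (Suc k) = (\<lambda>(x,a). x @ [a]) ` (lvl N k \<times> {..<bnd N k})"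
proof (intro set_eqI iffI)
  fix y assume "y \<in> lvl N (Suc k)"
  then have y: "y \<in> tree_V N" "length y = Suc k" unfolding lvl_def by auto
  then have "y = butlast y @ [last y]" by (metis append_butlast_last_id list.size(3) nat.distinct(1))
  then have "butlast y \<in> tree_V N \<and> last y < bnd N k" using y V_snoc by (metis length_butlast diff_Suc_1)
  then show "y \<in> (\<lambda>(x,a). x @ [a]) ` (lvl N k \<times> {..<bnd N k})"
    using y \<open>y = butlast y @ [last y]\<close> unfolding lvl_def
    by (intro image_eqI[where x="(butlast y, last y)"]) auto
next
  fix y assume "y \<in> (\<lambda>(x,a). x @ [a]) ` (lvl N k \<times> {..<bnd N k})"
  then show "y \<in> lvl N (Suc k)" unfolding lvl_def using V_snoc by auto
qed

lemma lvl_inj: "inj_on (\<lambda>(x,a). x @ [a]) (A \<times> B)"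
  by (auto simp: inj_on_def)

lemma lvl_finite: "finite (lvl N k)"
  by (induction k) (auto simp: lvl_0 lvl_Suc)

lemma card_lvl_Suc: "card (lvl N (Suc k)) = card (lvl N k) * bnd N k"
  unfolding lvl_Suc by (simp add: card_image[OF lvl_inj] card_cartesian_product)

lemma card_lvl_pos: "N \<ge> 2 \<Longrightarrow> card (lvl N k) > 0"
  by (induction k) (auto simp: lvl_0 card_lvl_Suc bnd_def)


definition muw :: "nat \<Rightarrow> (nat \<Rightarrow> real) \<Rightarrow> nat list \<Rightarrow> nat list \<Rightarrow> real" where
  "muw N w x y = (if tree_adj N x y then w (min (length x) (length y)) else 0)"

lemma ball_eq: "{x \<in> tree_V N. length x \<le> n} = (\<Union>k\<in>{..n}. lvl N k)"
  unfolding lvl_def by auto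

lemma Wo_eq:
  "Wo (tree_V N) (tree_adj N) (muw N w) [] n = (\<Sum>k\<le>n. real (card (lvl N k) * bnd N k) * w k)"
proof -
  define B where "B = {x \<in> tree_V N. length x \<le> n}"
  define S where "S = {(x, y). x \<in> tree_V N \<and> y \<in> tree_V N \<and> tree_adj N x y \<and> gdist (tree_adj N) [] x \<le> n
        \<and> gdist (tree_adj N) [] x < gdist (tree_adj N) [] y}"
  have SB: "S = (\<lambda>(x,a). (x, x @ [a])) ` (SIGMA x:B. {..<bnd N (length x)})"
  proof (intro set_eqI iffI)
    fix z assume "z \<in> S"
    then obtain x y where z: "z = (x,y)" and x: "x \<in> tree_V N" and y: "y \<in> tree_V N" and adj: "tree_adj N x y"
      and l1: "length x \<le> n" and l2: "length x < length y"
      unfolding S_def using gdist_root by auto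
    from adj obtain a where "y = x @ [a] \<or> x = y @ [a]" unfolding tree_adj_def by blast
    with l2 have ya: "y = x @ [a]" by auto
    then have "a < bnd N (length x)" using y V_snoc by blast
    then show "z \<in> (\<lambda>(x,a). (x, x @ [a])) ` (SIGMA x:B. {..<bnd N (length x)})"
      using z ya x l1 unfolding B_def by (intro image_eqI[where x="(x,a)"]) auto
  next
    fix z assume "z \<in> (\<lambda>(x,a). (x, x @ [a])) ` (SIGMA x:B. {..<bnd N (length x)})"
    then obtain x a where z: "z = (x, x @ [a])" and x: "x \<in> tree_V N" and l: "length x \<le> n"
      and a: "a < bnd N (length x)" unfolding B_def by auto
    have y: "x @ [a] \<in> tree_V N" using V_snoc x a by blast
    have "tree_adj N x (x @ [a])" unfolding tree_adj_def using x y by blast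
    then show "z \<in> S" unfolding S_def using z x y l gdist_root[OF x] gdist_root[OF y] by auto
  qed
  have inj: "inj_on (\<lambda>(x,a). (x, x @ [a])) (SIGMA x:B. {..<bnd N (length x)})"
    by (auto simp: inj_on_def)
  have fB: "finite B" unfolding B_def ball_eq using lvl_finite by auto
  have "Wo (tree_V N) (tree_adj N) (muw N w) [] n = (\<Sum>(x,y)\<in>S. muw N w x y)"
    unfolding Wo_def S_def by simp
  also have "\<dots> = (\<Sum>(x,a)\<in>(SIGMA x:B. {..<bnd N (length x)}). muw N w x (x @ [a]))"
    unfolding SB by (subst sum.reindex[OF inj]) (simp add: case_prod_unfold)
  also have "\<dots> = (\<Sum>(x,a)\<in>(SIGMA x:B. {..<bnd N (length x)}). w (length x))"
  proof (intro sum.cong refl)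
    fix z assume "z \<in> (SIGMA x:B. {..<bnd N (length x)})"
    then obtain x a where z: "z = (x,a)" "x \<in> tree_V N" "a < bnd N (length x)" unfolding B_def by auto
    then have "tree_adj N x (x @ [a])" unfolding tree_adj_def using V_snoc by blast
    then show "(case z of (x,a) \<Rightarrow> muw N w x (x @ [a])) = (case z of (x,a) \<Rightarrow> w (length x))"
      using z unfolding muw_def by simp
  qed
  also have "\<dots> = (\<Sum>x\<in>B. \<Sum>a<bnd N (length x). w (length x))"
    using fB by (subst sum.Sigma) auto
  also have "\<dots> = (\<Sum>x\<in>B. real (bnd N (length x)) * w (length x))" by simp
  also have "\<dots> = (\<Sum>k\<le>n. \<Sum>x\<in>lvl N k. real (bnd N (length x)) * w (length x))"
    unfolding B_def ball_eq using lvl_finite by (subst sum.UNION_disjoint) (auto simp: lvl_def)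
  also have "\<dots> = (\<Sum>k\<le>n. real (card (lvl N k) * bnd N k) * w k)"
  proof (intro sum.cong refl)
    fix k
    have "(\<Sum>x\<in>lvl N k. real (bnd N (length x)) * w (length x)) = (\<Sum>x\<in>lvl N k. real (bnd N k) * w k)"
      by (intro sum.cong) (auto simp: lvl_def)
    then show "(\<Sum>x\<in>lvl N k. real (bnd N (length x)) * w (length x)) = real (card (lvl N k) * bnd N k) * w k"
      by simp
  qed
  finally show ?thesis .
qed

lemma phi_pos: fixes e m :: real shows "e > 0 \<Longrightarrow> \<bar>e\<bar> powr (m-2) * e = e powr (m-1)"
proof -
  assume e: "e > 0"
  have ae: "\<bar>e\<bar> = e" using e by simp
  have "e powr (m-2) * e powr 1 = e powr (m-2+1)" by (simp only: powr_add)
  then show ?thesis using e ae by simp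
qed

lemma phi_neg: fixes e m :: real shows "e > 0 \<Longrightarrow> \<bar>-e\<bar> powr (m-2) * (-e) = - (e powr (m-1))"
  using phi_pos[of e m] by simp

lemma ln3: "3 * ln (3::real) \<ge> 1"
proof -
  have "ln (1/(3::real)) \<le> 1/3 - 1" by (intro ln_le_minus_one) auto
  then have "ln (3::real) \<ge> 2/3" by (simp add: ln_div)
  then show ?thesis by simp
qed

lemma vseq_props:
  fixes E :: "nat \<Rightarrow> real"
  assumes sm: "summable E" and pos: "\<And>k. E k > 0"
  defines "v \<equiv> \<lambda>k. 1 + (\<Sum>i. E (i + k))"
  shows "v k \<ge> 1" "v k - v (Suc k) = E k"
proof -
  have smk: "summable (\<lambda>i. E (i + k))" for k using summable_ignore_initial_segment[OF sm, of k] by simp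
  show "v k \<ge> 1" unfolding v_def using smk[of k] pos by (simp add: suminf_nonneg less_imp_le)
  have "(\<Sum>i. E (Suc i + k)) = (\<Sum>i. E (i + k)) - E (0 + k)"
    using suminf_split_head[OF smk[of k]] by simp
  then show "v k - v (Suc k) = E k" unfolding v_def by simp
qed

theorem mainTheorem10:
  fixes N :: nat and m p q \<epsilon> :: real
  assumes "N \<ge> 2" and "m > 1" and "p < 0" and "m - 1 < q" and "q < m" and "\<epsilon> > 0"
  shows "\<exists>mu. is_weight (tree_V N) (tree_adj N) mu \<and>
     (\<exists>c C. c > 0 \<and> C > 0 \<and> (\<forall>n::nat. n \<ge> 2 \<longrightarrow>
        c * (real n powr (q / (q - m + 1)) * ln (real n) powr ((m - 1) / (q - m + 1) + \<epsilon>))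
          \<le> Wo (tree_V N) (tree_adj N) mu [] n \<and>
        Wo (tree_V N) (tree_adj N) mu [] n
          \<le> C * (real n powr (q / (q - m + 1)) * ln (real n) powr ((m - 1) / (q - m + 1) + \<epsilon>)))) \<and>
     (\<exists>u. nontrivial_pos_solution (tree_V N) (tree_adj N) mu m p q u)"
proof -
  note N = assms(1) and m = assms(2) and p = assms(3) and q1 = assms(4) and q2 = assms(5) and e = assms(6)
  define d where "d = q - m + 1"
  have d0: "d > 0" and d1: "d < 1" unfolding d_def using q1 q2 by auto
  define b where "b = 1 / d"
  have b1: "b > 1" unfolding b_def using d0 d1 by simp
  have bd: "b * (q - m + 1) = 1" unfolding b_def d_def using d0 d_def by simp
  define a where "a = (m - 1) / (q - m + 1)"
  have a0: "a > 0" unfolding a_def using m d0 d_def by simp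
  have ab: "a = b * (m - 1)" unfolding a_def b_def d_def by simp
  have qa: "q / (q - m + 1) = a + 1" unfolding a_def using d0 d_def by (simp add: field_simps)
  define be where "be = a + \<epsilon>"
  have be0: "be > 0" unfolding be_def using a0 e by simp
  have q0: "q > 0" using q1 m by simp
  define s where "s = min \<epsilon> 1 / (2 * 4 powr (b * q))"
  have s0: "s > 0" unfolding s_def using e by simp
  have s2: "2 * 4 powr (b * q) * s = min \<epsilon> 1" unfolding s_def by simp
  have "4 powr (b * q) \<ge> 1" using b1 q0 by (simp add: ge_one_powr_ge_zero)
  then have sh: "s \<le> 1/2" unfolding s_def
    by (simp add: divide_le_eq)
  define E where "E = Eseq s b"
  define G where "G = Gseq a be"
  have Epos: "\<And>k. E k > 0" unfolding E_def using Eseq_pos[OF s0] by simp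
  have Gpos: "\<And>k. G k > 0" unfolding G_def Gseq_def by simp
  define cl where "cl = (\<lambda>k. real (card (lvl N k)))"
  have clpos: "\<And>k. cl k > 0" unfolding cl_def using card_lvl_pos[OF N] by simp
  have clS: "\<And>k. cl (Suc k) = cl k * real (bnd N k)" unfolding cl_def by (simp add: card_lvl_Suc)
  define w where "w = (\<lambda>k. G k / cl (Suc k))"
  have wpos: "\<And>k. w k > 0" unfolding w_def using Gpos clpos by simp
  define mu where "mu = muw N w"
  define v where "v = (\<lambda>k. 1 + (\<Sum>i. E (i + k)))"
  have smE: "summable E" unfolding E_def using Eseq_summable[OF s0 b1] .
  have v1: "\<And>k. v k \<ge> 1" and vE: "\<And>k. v k - v (Suc k) = E k"
    unfolding v_def using vseq_props[OF smE Epos] by auto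
  define u where "u = (\<lambda>x::nat list. v (length x))"
  have W: "is_weight (tree_V N) (tree_adj N) mu"
    unfolding is_weight_def mu_def muw_def using wpos adj_sym
    by (auto simp: min.commute less_imp_le)
  have Weq: "Wo (tree_V N) (tree_adj N) mu [] n = (\<Sum>k\<le>n. Gseq a be k)" for n
  proof -
    have "Wo (tree_V N) (tree_adj N) mu [] n = (\<Sum>k\<le>n. real (card (lvl N k) * bnd N k) * w k)"
      unfolding mu_def by (rule Wo_eq)
    also have "\<dots> = (\<Sum>k\<le>n. G k)"
    proof (intro sum.cong refl)
      fix k
      have "real (card (lvl N k) * bnd N k) = cl (Suc k)" using clS unfolding cl_def by simp
      then show "real (card (lvl N k) * bnd N k) * w k = G k" unfolding w_def using clpos[of "Suc k"] by simp
    qed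
    finally show ?thesis unfolding G_def .
  qed
  have growth: "\<exists>c C. c > 0 \<and> C > 0 \<and> (\<forall>n::nat. n \<ge> 2 \<longrightarrow>
        c * (real n powr (q / (q - m + 1)) * ln (real n) powr ((m - 1) / (q - m + 1) + \<epsilon>))
          \<le> Wo (tree_V N) (tree_adj N) mu [] n \<and>
        Wo (tree_V N) (tree_adj N) mu [] n
          \<le> C * (real n powr (q / (q - m + 1)) * ln (real n) powr ((m - 1) / (q - m + 1) + \<epsilon>)))"
  proof (intro exI conjI allI impI)
    show "(1/2) * (1/2) powr a * (1/2) powr be > (0::real)" by simp
    show "2 * 3 powr a * 3 powr be > (0::real)" by simp
    fix n :: nat assume n: "n \<ge> 2"
    have ee: "(m - 1) / (q - m + 1) + \<epsilon> = be" unfolding be_def a_def ..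
    show "(1/2) * (1/2) powr a * (1/2) powr be * (real n powr (q / (q - m + 1)) * ln (real n) powr ((m - 1) / (q - m + 1) + \<epsilon>))
          \<le> Wo (tree_V N) (tree_adj N) mu [] n"
      unfolding Weq qa ee using W_lower[of a be n] a0 be0 n by simp
    show "Wo (tree_V N) (tree_adj N) mu [] n \<le> 2 * 3 powr a * 3 powr be * (real n powr (q / (q - m + 1)) * ln (real n) powr ((m - 1) / (q - m + 1) + \<epsilon>))"
      unfolding Weq qa ee using W_upper[of a be n] a0 be0 n by simp
  qed
  have ineq: "mLap (tree_adj N) mu m u x + u x powr p * gradn (tree_adj N) mu u x powr q \<le> 0"
    if x: "x \<in> tree_V N" for x
  proof (cases "x = []")
    case True
    have mroot: "mu [] [a] = w 0" if "a < N" for a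
    proof -
      have "[a] \<in> tree_V N" using V_snoc[of "[]" a N] V_Nil that by (simp add: bnd_def)
      then have "tree_adj N [] [a]" unfolding tree_adj_def using V_Nil by auto
      then show ?thesis unfolding mu_def muw_def by simp
    qed
    have ur: "u [a] - u [] = - E 0" for a unfolding u_def using vE[of 0] by simp
    define B where "B = real N * w 0"
    have Bp: "B > 0" unfolding B_def using N wpos by simp
    have vm: "vmeas (tree_adj N) mu [] = 0 + B"
      unfolding vmeas_def sum_nbrs_root B_def using mroot by simp
    have ml: "mLap (tree_adj N) mu m u [] = (0 * E 0 powr (m-1) - B * E 0 powr (m-1)) / (0 + B)"
    proof -
      have t: "mu [] [a] * \<bar>u [a] - u []\<bar> powr (m-2) * (u [a] - u []) = w 0 * (- (E 0 powr (m-1)))"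
        if "a \<in> {..<N}" for a
        proof -
          have a: "a < N" using that by simp
          show ?thesis unfolding mroot[OF a] ur mult.assoc phi_neg[OF Epos[of 0]] by simp
        qed
      have su: "(\<Sum>y\<in>nbrs (tree_adj N) []. mu [] y * \<bar>u y - u []\<bar> powr (m-2) * (u y - u [])) = (\<Sum>a<N. w 0 * (- (E 0 powr (m-1))))"
        by (subst sum_nbrs_root) (rule sum.cong[OF refl t])
      have "mLap (tree_adj N) mu m u [] = (1 / (0 + B)) * (\<Sum>a<N. w 0 * (- (E 0 powr (m-1))))"
        unfolding mLap_def vm su ..
      also have "\<dots> = (0 * E 0 powr (m-1) - B * E 0 powr (m-1)) / (0 + B)"
        unfolding B_def by simp
      finally show ?thesis .
    qed
    have gr: "gradn (tree_adj N) mu u [] = sqrt ((0 * E 0 ^ 2 + B * E 0 ^ 2) / (2 * (0 + B)))"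
    proof -
      have t: "mu [] [a] / (2 * (0 + B)) * (u [a] - u [])^2 = w 0 / (2 * (0 + B)) * (E 0)^2"
        if "a \<in> {..<N}" for a
        proof -
          have a: "a < N" using that by simp
          show ?thesis unfolding mroot[OF a] ur by simp
        qed
      have su: "(\<Sum>y\<in>nbrs (tree_adj N) []. mu [] y / (2 * (0 + B)) * (u y - u [])^2) = (\<Sum>a<N. w 0 / (2 * (0 + B)) * (E 0)^2)"
        by (subst sum_nbrs_root) (rule sum.cong[OF refl t])
      have "gradn (tree_adj N) mu u [] = sqrt (\<Sum>a<N. w 0 / (2 * (0 + B)) * (E 0)^2)"
        unfolding gradn_def vm su ..
      also have "\<dots> = sqrt ((0 * E 0 ^ 2 + B * E 0 ^ 2) / (2 * (0 + B)))"
        unfolding B_def by simp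
      finally show ?thesis .
    qed
    have S: "2 * 1 powr q * E 0 powr (q - m + 1) \<le> 1"
    proof -
      have "E 0 powr (q - m + 1) = s / (real (0+3) * ln (real (0+3)))"
        unfolding E_def by (rule Eseq_powr[OF s0 bd])
      also have "\<dots> \<le> s / 1" using ln3 s0 by (intro divide_left_mono) auto
      finally show ?thesis using sh by simp
    qed
    have "mLap (tree_adj N) mu m u [] + u [] powr p * gradn (tree_adj N) mu u [] powr q \<le> 0"
      unfolding ml gr
      by (rule key_ineq[where R=1 and \<rho>=1]) (use Bp Epos v1 p q0 m S in \<open>auto simp: u_def\<close>)
    then show ?thesis using True by simp
  next
    case False
    define j where "j = length x - 1"
    have lx: "length x = Suc j" unfolding j_def using False by simp
    have bl: "length (butlast x) = j" using lx by simp
    have mpar: "mu x (butlast x) = w j"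
    proof -
      have "x = butlast x @ [last x]" using False by simp
      then have "tree_adj N x (butlast x)" unfolding tree_adj_def using x V_butlast by metis
      then show ?thesis unfolding mu_def muw_def using lx bl by simp
    qed
    have mch: "mu x (x @ [a]) = w (Suc j)" if "a < N - 1" for a
    proof -
      have "x @ [a] \<in> tree_V N" using V_snoc[of x a N] x that lx by (simp add: bnd_def)
      then have "tree_adj N x (x @ [a])" unfolding tree_adj_def using x by blast
      then show ?thesis unfolding mu_def muw_def using lx by simp
    qed
    have up: "u (butlast x) - u x = E j" unfolding u_def using bl lx vE by simp
    have uc: "u (x @ [a]) - u x = - E (Suc j)" for a unfolding u_def using lx vE[of "Suc j"] by simp
    define A where "A = w j"
    define B where "B = real (N - 1) * w (Suc j)"
    have Ap: "A > 0" unfolding A_def using wpos by simp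
    have Bp: "B > 0" unfolding B_def using wpos N by simp
    have vm: "vmeas (tree_adj N) mu x = A + B"
      unfolding vmeas_def sum_nbrs_succ[OF x False] A_def B_def using mpar mch by simp
    have ml: "mLap (tree_adj N) mu m u x = (A * E j powr (m-1) - B * E (Suc j) powr (m-1)) / (A + B)"
    proof -
      have "mLap (tree_adj N) mu m u x = (1 / (A + B)) * (w j * E j powr (m-1) + (\<Sum>a<N-1. w (Suc j) * (- (E (Suc j) powr (m-1)))))"
      proof -
        have t: "mu x (x @ [a]) * \<bar>u (x @ [a]) - u x\<bar> powr (m-2) * (u (x @ [a]) - u x) = w (Suc j) * (- (E (Suc j) powr (m-1)))"
          if "a \<in> {..<N-1}" for a
          proof -
          have a: "a < N - 1" using that by simp
          show ?thesis unfolding mch[OF a] uc mult.assoc phi_neg[OF Epos[of "Suc j"]] by simp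
        qed
        have t0: "mu x (butlast x) * \<bar>u (butlast x) - u x\<bar> powr (m-2) * (u (butlast x) - u x) = w j * E j powr (m-1)"
          unfolding mpar up mult.assoc phi_pos[OF Epos[of j]] by simp
        have su: "(\<Sum>y\<in>nbrs (tree_adj N) x. mu x y * \<bar>u y - u x\<bar> powr (m-2) * (u y - u x)) = w j * E j powr (m-1) + (\<Sum>a<N-1. w (Suc j) * (- (E (Suc j) powr (m-1))))"
          by (subst sum_nbrs_succ[OF x False]) (rule arg_cong2[where f="(+)", OF t0 sum.cong[OF refl t]])
        show ?thesis unfolding mLap_def vm su ..
      qed
      also have "\<dots> = (A * E j powr (m-1) - B * E (Suc j) powr (m-1)) / (A + B)"
        unfolding A_def B_def by simp
      finally show ?thesis .
    qed
    have gr: "gradn (tree_adj N) mu u x = sqrt ((A * E j ^ 2 + B * E (Suc j) ^ 2) / (2 * (A + B)))"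
    proof -
      have "gradn (tree_adj N) mu u x = sqrt (w j / (2 * (A + B)) * (E j)^2 + (\<Sum>a<N-1. w (Suc j) / (2 * (A + B)) * (E (Suc j))^2))"
      proof -
        have t: "mu x (x @ [a]) / (2 * (A + B)) * (u (x @ [a]) - u x)^2 = w (Suc j) / (2 * (A + B)) * (E (Suc j))^2"
          if "a \<in> {..<N-1}" for a
          proof -
          have a: "a < N - 1" using that by simp
          show ?thesis unfolding mch[OF a] uc by simp
        qed
        have t0: "mu x (butlast x) / (2 * (A + B)) * (u (butlast x) - u x)^2 = w j / (2 * (A + B)) * (E j)^2"
          unfolding mpar up ..
        have su: "(\<Sum>y\<in>nbrs (tree_adj N) x. mu x y / (2 * (A + B)) * (u y - u x)^2) = w j / (2 * (A + B)) * (E j)^2 + (\<Sum>a<N-1. w (Suc j) / (2 * (A + B)) * (E (Suc j))^2)"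
          by (subst sum_nbrs_succ[OF x False]) (rule arg_cong2[where f="(+)", OF t0 sum.cong[OF refl t]])
        show ?thesis unfolding gradn_def vm su ..
      qed
      also have "\<dots> = sqrt ((A * E j ^ 2 + B * E (Suc j) ^ 2) / (2 * (A + B)))"
        unfolding A_def B_def using N by (simp add: add_divide_distrib of_nat_diff mult.assoc)
      finally show ?thesis .
    qed
    define \<rho> where "\<rho> = 1 - (ln (real (j+3)) / ln (real (Suc j + 3))) powr \<epsilon>"
    have clj: "cl (Suc (Suc j)) = cl (Suc j) * real (N - 1)" using clS[of "Suc j"] by (simp add: bnd_def)
    have AJ: "A * E j powr (m-1) = s powr a * ln (real (j+3)) powr \<epsilon> / cl (Suc j)"
      unfolding A_def w_def using J_eq[OF s0 ab, of \<epsilon> j] unfolding G_def E_def be_def by simp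
    have BJ: "B * E (Suc j) powr (m-1) = s powr a * ln (real (Suc j+3)) powr \<epsilon> / cl (Suc j)"
    proof -
      have "B = G (Suc j) / cl (Suc j)" unfolding B_def w_def clj using N by simp
      then show ?thesis using J_eq[OF s0 ab, of \<epsilon> "Suc j"] unfolding G_def E_def be_def by simp
    qed
    have J: "A * E j powr (m-1) \<le> (1 - \<rho>) * (B * E (Suc j) powr (m-1))"
    proof -
      have "(1 - \<rho>) = ln (real (j+3)) powr \<epsilon> / ln (real (Suc j+3)) powr \<epsilon>"
        unfolding \<rho>_def by (simp add: powr_divide)
      moreover have "ln (real (Suc j+3)) powr \<epsilon> > 0" by simp
      ultimately show ?thesis unfolding AJ BJ by (simp add: mult.commute)
    qed
    have S: "2 * (4 powr b) powr q * E (Suc j) powr (q - m + 1) \<le> \<rho>"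
    proof -
      have "E (Suc j) powr (q - m + 1) = s / (real (Suc j+3) * ln (real (Suc j+3)))"
        unfolding E_def by (rule Eseq_powr[OF s0 bd])
      then have "2 * (4 powr b) powr q * E (Suc j) powr (q - m + 1) = min \<epsilon> 1 / (real (Suc j+3) * ln (real (Suc j+3)))"
        using s2 by (simp add: powr_powr)
      also have "\<dots> \<le> 1 - (ln (real (Suc j+3) - 1) / ln (real (Suc j+3))) powr \<epsilon>"
        by (rule rho_bound) (use e in auto)
      also have "real (Suc j+3) - 1 = real (j+3)" by simp
      finally show ?thesis unfolding \<rho>_def .
    qed
    have "mLap (tree_adj N) mu m u x + u x powr p * gradn (tree_adj N) mu u x powr q \<le> 0"
      unfolding ml gr
      by (rule key_ineq[where R="4 powr b" and \<rho>=\<rho>])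
         (use Ap Bp Epos v1 p q0 m J S Eseq_dec[OF s0, of b j] Eseq_ratio[OF s0, of b j] b1 in \<open>auto simp: E_def u_def\<close>)
    then show ?thesis .
  qed
  have sol: "nontrivial_pos_solution (tree_V N) (tree_adj N) mu m p q u"
    unfolding nontrivial_pos_solution_def
  proof (intro conjI ballI)
    fix x show "u x > 0" unfolding u_def using v1 by (smt (verit))
  next
    have z: "[0] \<in> tree_V N" using V_snoc[of "[]" 0 N] V_Nil N by (simp add: bnd_def)
    have "u [] \<noteq> u [0]" unfolding u_def using vE[of 0] Epos[of 0] by auto
    then show "\<exists>x\<in>tree_V N. \<exists>y\<in>tree_V N. u x \<noteq> u y" using V_Nil z by blast
  next
    fix x assume "x \<in> tree_V N" then show "mLap (tree_adj N) mu m u x + u x powr p * gradn (tree_adj N) mu u x powr q \<le> 0"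
      by (rule ineq)
  qed
  show ?thesis using W growth sol by blast
qed

end
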